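(* Consider, for a constant $A=\lambda\neq0$ and smooth functions $B,C$, the equation $$u_t=\big[\lambda u_{xx}+B(u)u_x+C(u)\big]_x\tag{E}$$ and the system $$v_t=\lambda u_{xx}+B(u)u_x+C(u),\qquad v_x=u,\qquad v_{xx}=u_x.\tag{S'}$$ The system of determining equations for Lie symmetries $X=\xi^0\partial_t+\xi^1\partial_x+\eta\partial_u$ of (E) (with $\xi^0=\xi^0(t)$, $\xi^1=\xi^1(t,x)$, $\eta=\alpha(t,x)u+\beta(t,x)$) $$\begin{aligned} &(\alpha_x+\xi^1_{xx})A'=0,\quad (\alpha u+\beta)A'=(3\xi^1_x-\xi^0_t)A,\quad (\alpha u+\beta)B'=(2\xi^1_x-\xi^0_t)B-3\alpha_x A,\\ &(\alpha_x+\xi^1_{xx})C'=(\alpha_{xx}+\xi^1_{xxx})B-(\alpha_{xxx}+\xi^1_{xxxx})A+\alpha_t+\xi^1_{xt},\\ &(\alpha_x u+\beta_x)C'=-(\alpha_{xx}u+\beta_{xx})B-(\alpha_{xxx}u+\beta_{xxx})A+\alpha_t u+\beta_t, \end{aligned}$$ is NOT equivalent to the system of determining equations for Lie symmetries $X=\xi^0\partial_t+\xi^1\partial_x+\eta^1\partial_u+\eta^2\partial_v$ of (S') (with $\xi^0=\xi^0(t)$, $\xi^1=\xi^1(t,x)$, $\eta^1=\alpha(t,x,v)u+\beta(t,x,v)$, $\eta^2=\eta^2(t,x,v)$) $$\begin{aligned} &(\alpha u+\beta)A'=(3\xi^1_x-\xi^0_t)A,\quad (\alpha u+\beta)B'=(2\xi^1_x-\xi^0_t)B-3(\alpha_v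 u+\alpha_x)A,\\ &(\alpha u+\beta)C'=(\alpha+\xi^1_x-\xi^0_t)C-\big[\alpha_v u^2+(2\alpha_x+\xi^1_{xx})u+\beta_x\big]B\\ &\qquad-\big[\alpha_{vv}u^3+3\alpha_{vx}u^2+(3\alpha_{xx}+2\xi^1_{xxx})u+\beta_{xx}\big]A-\xi^1_t u+\eta^2_t,\\ &\eta^2_v=\alpha+\xi^1_x,\qquad \eta^2_x=\beta. \end{aligned}$$ Moreover, for suitably specified functions $B$ and $C$, the latter system produces pure potential symmetries of (E), i.e. Lie symmetries of (S') in which at least one of $\xi^0,\xi^1,\eta^1$ depends genuinely on $v$.
   Context: Here $A'$, $B'$, $C'$ denote derivatives with respect to $u$ (so $A'=0$ when $A=\lambda$) and subscripts denote partial derivatives. The determining equations are those produced by the classical Lie algorithm for infinitesimal invariance; system (S') is the potential system $v_t=\lambda u_{xx}+Bu_x+C$, $v_x=u$ (introduced via $u=v_x$) supplemented by the differential consequence $v_{xx}=u_x$. A Lie symmetry of (S') is a pure potential symmetry of (E) if one of the coefficients of $\partial_t,\partial_x,\partial_u$ depends on $v$. Standing assumption: (E) is nonlinear. *)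

theory Defs
  imports "HOL-Analysis.Analysis"
begin

definition smooth1 :: "(real \<Rightarrow> real) \<Rightarrow> bool" where
  "smooth1 f \<longleftrightarrow> (\<forall>n x. (deriv ^^ n) f differentiable at x)"

definition pd2_t :: "(real \<Rightarrow> real \<Rightarrow> real) \<Rightarrow> real \<Rightarrow> real \<Rightarrow> real" where
  "pd2_t f = (\<lambda>t x. deriv (\<lambda>s. f s x) t)"
definition pd2_x :: "(real \<Rightarrow> real \<Rightarrow> real) \<Rightarrow> real \<Rightarrow> real \<Rightarrow> real" where
  "pd2_x f = (\<lambda>t x. deriv (\<lambda>y. f t y) x)"

fun iter2 :: "bool list \<Rightarrow> (real \<Rightarrow> real \<Rightarrow> real) \<Rightarrow> real \<Rightarrow> real \<Rightarrow> real" where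
  "iter2 [] f = f"
| "iter2 (d # ds) f = (if d then pd2_t else pd2_x) (iter2 ds f)"

definition smooth2 :: "(real \<Rightarrow> real \<Rightarrow> real) \<Rightarrow> bool" where
  "smooth2 f \<longleftrightarrow> (\<forall>ds t x. (\<lambda>p. iter2 ds f (fst p) (snd p)) differentiable at (t, x))"

definition pd3_t :: "(real \<Rightarrow> real \<Rightarrow> real \<Rightarrow> real) \<Rightarrow> real \<Rightarrow> real \<Rightarrow> real \<Rightarrow> real" where
  "pd3_t f = (\<lambda>t x v. deriv (\<lambda>s. f s x v) t)"
definition pd3_x :: "(real \<Rightarrow> real \<Rightarrow> real \<Rightarrow> real) \<Rightarrow> real \<Rightarrow> real \<Rightarrow> real \<Rightarrow> real" where
  "pd3_x f = (\<lambda>t x v. deriv (\<lambda>y. f t y v) x)"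
definition pd3_v :: "(real \<Rightarrow> real \<Rightarrow> real \<Rightarrow> real) \<Rightarrow> real \<Rightarrow> real \<Rightarrow> real \<Rightarrow> real" where
  "pd3_v f = (\<lambda>t x v. deriv (\<lambda>w. f t x w) v)"

fun iter3 :: "nat list \<Rightarrow> (real \<Rightarrow> real \<Rightarrow> real \<Rightarrow> real) \<Rightarrow> real \<Rightarrow> real \<Rightarrow> real \<Rightarrow> real" where
  "iter3 [] f = f"
| "iter3 (d # ds) f = (if d = 0 then pd3_t else if d = 1 then pd3_x else pd3_v) (iter3 ds f)"

definition smooth3 :: "(real \<Rightarrow> real \<Rightarrow> real \<Rightarrow> real) \<Rightarrow> bool" where
  "smooth3 f \<longleftrightarrow>
     (\<forall>ds t x v. (\<lambda>p. iter3 ds f (fst p) (fst (snd p)) (snd (snd p))) differentiable at (t, x, v))"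

definition detE ::
  "(real \<Rightarrow> real) \<Rightarrow> (real \<Rightarrow> real) \<Rightarrow> (real \<Rightarrow> real) \<Rightarrow>
   (real \<Rightarrow> real) \<Rightarrow> (real \<Rightarrow> real \<Rightarrow> real) \<Rightarrow> (real \<Rightarrow> real \<Rightarrow> real) \<Rightarrow> (real \<Rightarrow> real \<Rightarrow> real) \<Rightarrow> bool"
  where
  "detE A B C xi0 xi1 \<alpha> \<beta> \<longleftrightarrow>
    (\<forall>t x u.
      let X = pd2_x; T = pd2_t; xi0t = deriv xi0 t in
      (X \<alpha> t x + X (X xi1) t x) * deriv A u = 0
    \<and> (\<alpha> t x * u + \<beta> t x) * deriv A u = (3 * X xi1 t x - xi0t) * A u
    \<and> (\<alpha> t x * u + \<beta> t x) * deriv B u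
        = (2 * X xi1 t x - xi0t) * B u - 3 * X \<alpha> t x * A u
    \<and> (X \<alpha> t x + X (X xi1) t x) * deriv C u
        = (X (X \<alpha>) t x + X (X (X xi1)) t x) * B u
          - (X (X (X \<alpha>)) t x + X (X (X (X xi1))) t x) * A u
          + T \<alpha> t x + T (X xi1) t x
    \<and> (X \<alpha> t x * u + X \<beta> t x) * deriv C u
        = - (X (X \<alpha>) t x * u + X (X \<beta>) t x) * B u
          - (X (X (X \<alpha>)) t x * u + X (X (X \<beta>)) t x) * A u
          + T \<alpha> t x * u + T \<beta> t x)"

definition detS ::
  "(real \<Rightarrow> real) \<Rightarrow> (real \<Rightarrow> real) \<Rightarrow> (real \<Rightarrow> real) \<Rightarrow>
   (real \<Rightarrow> real) \<Rightarrow> (real \<Rightarrow> real \<Rightarrow> real) \<Rightarrow>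
   (real \<Rightarrow> real \<Rightarrow> real \<Rightarrow> real) \<Rightarrow> (real \<Rightarrow> real \<Rightarrow> real \<Rightarrow> real) \<Rightarrow> (real \<Rightarrow> real \<Rightarrow> real \<Rightarrow> real) \<Rightarrow> bool"
  where
  "detS A B C xi0 xi1 \<alpha> \<beta> \<eta>2 \<longleftrightarrow>
    (\<forall>t x v u.
      let X = pd3_x; V = pd3_v; T = pd3_t; xi0t = deriv xi0 t;
          xi1x = pd2_x xi1 t x; xi1xx = pd2_x (pd2_x xi1) t x;
          xi1xxx = pd2_x (pd2_x (pd2_x xi1)) t x; xi1t = pd2_t xi1 t x;
          eta1 = \<alpha> t x v * u + \<beta> t x v in
      eta1 * deriv A u = (3 * xi1x - xi0t) * A u
    \<and> eta1 * deriv B u = (2 * xi1x - xi0t) * B u - 3 * (V \<alpha> t x v * u + X \<alpha> t x v) * A u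
    \<and> eta1 * deriv C u
        = (\<alpha> t x v + xi1x - xi0t) * C u
          - (V \<alpha> t x v * u^2 + (2 * X \<alpha> t x v + xi1xx) * u + X \<beta> t x v) * B u
          - (V (V \<alpha>) t x v * u^3 + 3 * V (X \<alpha>) t x v * u^2
             + (3 * X (X \<alpha>) t x v + 2 * xi1xxx) * u + X (X \<beta>) t x v) * A u
          - xi1t * u + T \<eta>2 t x v
    \<and> V \<eta>2 t x v = \<alpha> t x v + xi1x
    \<and> X \<eta>2 t x v = \<beta> t x v)"

definition det_equiv :: "(real \<Rightarrow> real) \<Rightarrow> (real \<Rightarrow> real) \<Rightarrow> (real \<Rightarrow> real) \<Rightarrow> bool" where
  "det_equiv A B C \<longleftrightarrow>
    (\<forall>xi0 xi1 \<alpha> \<beta> \<eta>2. smooth1 xi0 \<and> smooth2 xi1 \<and> smooth3 \<alpha> \<and> smooth3 \<beta> \<and> smooth3 \<eta>2 \<and>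
        detS A B C xi0 xi1 \<alpha> \<beta> \<eta>2 \<longrightarrow>
        (\<forall>t x v w. \<alpha> t x v = \<alpha> t x w \<and> \<beta> t x v = \<beta> t x w) \<and>
        (\<forall>v. detE A B C xi0 xi1 (\<lambda>t x. \<alpha> t x v) (\<lambda>t x. \<beta> t x v)))
  \<and> (\<forall>xi0 xi1 \<alpha> \<beta>. smooth1 xi0 \<and> smooth2 xi1 \<and> smooth2 \<alpha> \<and> smooth2 \<beta> \<and>
        detE A B C xi0 xi1 \<alpha> \<beta> \<longrightarrow>
        (\<exists>\<eta>2. smooth3 \<eta>2 \<and> detS A B C xi0 xi1 (\<lambda>t x v. \<alpha> t x) (\<lambda>t x v. \<beta> t x) \<eta>2))"

text \<open>A pure potential symmetry: a (smooth) Lie symmetry of (S') in which one of the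
  coefficients of d/dt, d/dx, d/du depends on v. Since xi0, xi1 do not depend on v by the
  ansatz, this means eta1 = alpha u + beta depends on v.\<close>
definition pure_potential_symmetry ::
  "(real \<Rightarrow> real) \<Rightarrow> (real \<Rightarrow> real) \<Rightarrow> (real \<Rightarrow> real) \<Rightarrow> bool" where
  "pure_potential_symmetry A B C \<longleftrightarrow>
    (\<exists>xi0 xi1 \<alpha> \<beta> \<eta>2. smooth1 xi0 \<and> smooth2 xi1 \<and> smooth3 \<alpha> \<and> smooth3 \<beta> \<and> smooth3 \<eta>2 \<and>
       detS A B C xi0 xi1 \<alpha> \<beta> \<eta>2 \<and>
       (\<exists>t x v w u. \<alpha> t x v * u + \<beta> t x v \<noteq> \<alpha> t x w * u + \<beta> t x w))"

text \<open>(E) with A = lambda is linear iff B is constant and C is affine.\<close>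
definition nonlinear_E :: "(real \<Rightarrow> real) \<Rightarrow> (real \<Rightarrow> real) \<Rightarrow> bool" where
  "nonlinear_E B C \<longleftrightarrow> \<not> (\<exists>b c0 c1. \<forall>u. B u = b \<and> C u = c0 + c1 * u)"

end

theory Submission
  imports Defs "HOL-Computational_Algebra.Polynomial"
begin

lemma deriv_poly_fun: "deriv (poly p) = poly (pderiv (p::real poly))"
  by (rule ext, rule DERIV_imp_deriv, rule poly_DERIV)

lemma smooth1_poly: "smooth1 (poly (p::real poly))"
proof -
  have "\<exists>q. (deriv ^^ n) (poly p) = poly q" for n
    by (induction n) (auto simp: deriv_poly_fun)
  then show ?thesis unfolding smooth1_def
    by (metis poly_DERIV real_differentiable_def)
qed

lemma deriv_const0: "deriv (\<lambda>s. c::real) t = 0"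
  by (rule DERIV_imp_deriv) (rule DERIV_const)

lemma deriv_exp': "deriv (\<lambda>w. exp w) v = exp (v::real)"
  by (rule DERIV_imp_deriv) (rule DERIV_exp)

lemma iter2_zero: "iter2 ds (\<lambda>t x. 0) = (\<lambda>t x. 0)"
  by (induction ds) (auto simp: pd2_t_def pd2_x_def deriv_const0)

lemma smooth2_zero: "smooth2 (\<lambda>t x. 0)"
  unfolding smooth2_def iter2_zero by simp

lemma iter3_zero: "iter3 ds (\<lambda>t x v. 0) = (\<lambda>t x v. 0)"
  by (induction ds) (auto simp: pd3_t_def pd3_x_def pd3_v_def deriv_const0)

lemma iter3_exp: "iter3 ds (\<lambda>t x v. exp v) = (\<lambda>t x v. exp v) \<or> iter3 ds (\<lambda>t x v. exp v) = (\<lambda>t x v. 0)"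
proof (induction ds)
  case Nil then show ?case by simp
next
  case (Cons d ds)
  then show ?case
    by (auto simp: pd3_t_def pd3_x_def pd3_v_def deriv_const0 deriv_exp')
qed

lemma smooth3_zero: "smooth3 (\<lambda>t x v. 0)"
  unfolding smooth3_def iter3_zero by simp

lemma smooth3_exp: "smooth3 (\<lambda>t x v. exp v)"
  unfolding smooth3_def
proof (intro allI)
  fix ds t x v
  have d: "(\<lambda>p::real\<times>real\<times>real. exp (snd (snd p))) differentiable at (t, x, v)"
  proof -
    have "((\<lambda>p::real\<times>real\<times>real. exp (snd (snd p))) has_derivative (\<lambda>h. exp v * snd (snd h))) (at (t,x,v))"
      by (auto intro!: derivative_eq_intros)
    then show ?thesis unfolding differentiable_def by blast
  qed
  from iter3_exp[of ds] show "(\<lambda>p. iter3 ds (\<lambda>t x v. exp v) (fst p) (fst (snd p)) (snd (snd p))) differentiable at (t, x, v)"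
    using d by auto
qed

lemma B_poly: "(\<lambda>u::real. -3 * u) = poly [:0, -3:]"
  by (rule ext) simp
lemma C_poly: "(\<lambda>u::real. u^3) = poly [:0, 0, 0, 1:]"
  by (rule ext) (simp add: power3_eq_cube)

lemma dB: "deriv (\<lambda>u::real. -3 * u) u = -3"
  by (rule DERIV_imp_deriv) (auto intro!: derivative_eq_intros)
lemma dC: "deriv (\<lambda>u::real. u^3) u = 3 * u^2"
  by (rule DERIV_imp_deriv) (auto intro!: derivative_eq_intros)

lemma detS_ex: "detS (\<lambda>_. 1) (\<lambda>u. -3 * u) (\<lambda>u. u^3) (\<lambda>_. 0) (\<lambda>t x. 0)
    (\<lambda>t x v. exp v) (\<lambda>t x v. 0) (\<lambda>t x v. exp v)"
  unfolding detS_def Let_def pd3_t_def pd3_x_def pd3_v_def pd2_t_def pd2_x_def deriv_const0 deriv_exp' dB dC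
  apply (intro allI)
  apply (simp add: algebra_simps power2_eq_square power3_eq_cube)
  done

theorem theorem3:
  shows "\<exists>(lam::real) B C. lam \<noteq> 0 \<and> smooth1 B \<and> smooth1 C \<and> nonlinear_E B C \<and>
           \<not> det_equiv (\<lambda>_. lam) B C \<and> pure_potential_symmetry (\<lambda>_. lam) B C"
proof (intro exI conjI)
  show "(1::real) \<noteq> 0" by simp
  show "smooth1 (\<lambda>u::real. -3 * u)" unfolding B_poly by (rule smooth1_poly)
  show "smooth1 (\<lambda>u::real. u^3)" unfolding C_poly by (rule smooth1_poly)
  show "nonlinear_E (\<lambda>u::real. -3 * u) (\<lambda>u. u^3)"
    unfolding nonlinear_E_def
  proof
    assume "\<exists>b c0 c1. \<forall>u. -3 * u = b \<and> u ^ 3 = c0 + c1 * (u::real)"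
    then obtain b where "\<forall>u::real. -3 * u = b" by blast
    then have "-3 * (0::real) = -3 * 1" by metis
    then show False by simp
  qed
  have s1: "smooth1 (\<lambda>_::real. 0::real)"
  proof -
    have "(\<lambda>_::real. 0::real) = poly 0" by (rule ext) simp
    then show ?thesis using smooth1_poly[of 0] by simp
  qed
  show "\<not> det_equiv (\<lambda>_. 1) (\<lambda>u. -3 * u) (\<lambda>u. u^3)"
  proof
    assume "det_equiv (\<lambda>_. 1) (\<lambda>u. -3 * u) (\<lambda>u. u^3)"
    note H = conjunct1[OF this[unfolded det_equiv_def]]
    have P: "smooth1 (\<lambda>_::real. 0::real) \<and> smooth2 (\<lambda>t x. 0) \<and> smooth3 (\<lambda>t x v. exp v) \<and> smooth3 (\<lambda>t x v. 0) \<and> smooth3 (\<lambda>t x v. exp v) \<and>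
        detS (\<lambda>_. 1) (\<lambda>u. -3 * u) (\<lambda>u. u^3) (\<lambda>_. 0) (\<lambda>t x. 0) (\<lambda>t x v. exp v) (\<lambda>t x v. 0) (\<lambda>t x v. exp v)"
      using detS_ex s1 smooth2_zero smooth3_exp smooth3_zero by (intro conjI)
    note X = conjunct1[OF mp[OF spec[OF spec[OF spec[OF spec[OF spec[OF H, of "\<lambda>_. 0"], of "\<lambda>t x. 0"], of "\<lambda>t x v. exp v"], of "\<lambda>t x v. 0"], of "\<lambda>t x v. exp v"] P]]
    show False using X[rule_format, of 0 1] by simp
  qed
  show "pure_potential_symmetry (\<lambda>_. 1) (\<lambda>u. -3 * u) (\<lambda>u. u^3)"
    unfolding pure_potential_symmetry_def
  proof (intro exI conjI)
    show "detS (\<lambda>_. 1) (\<lambda>u. -3 * u) (\<lambda>u. u^3) (\<lambda>_. 0) (\<lambda>t x. 0)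
    (\<lambda>t x v. exp v) (\<lambda>t x v. 0) (\<lambda>t x v. exp v)" by (rule detS_ex)
    show "exp (0::real) * 1 + 0 \<noteq> exp 1 * 1 + 0" by simp
  qed (rule s1 smooth2_zero smooth3_exp smooth3_zero)+
qed

end
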